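(* Let $p$ be prime, $f\ge1$, let $r_0,\dots,r_{f-1}$ be integers in $[1,p]$, let $J\subset\{0,\dots,f-1\}$, and set $h_i=r_i$ if $i\in J$ and $h_i=0$ otherwise. Then $$\sum_{i=0}^{f-1}p^{f-1-i}h_i\equiv\sum_{i=0}^{f-1}p^{f-1-i}(r_i-h_i)\pmod{p^f-1}$$ if and only if either: $(r_0,\dots,r_{f-1})\in\mathcal P$ and $J$ satisfies, for all $i$ (indices mod $f$): if $(r_{i-1},r_i)=(p,1)$ then ($i+1\in J\iff i\notin J$), and if $(r_{i-1},r_i)\in\{(1,p-1),(p-1,p-1)\}$ then ($i+1\in J\iff i\in J$); or else $p=2$, $(r_0,\dots,r_{f-1})=(2,\dots,2)$ and $J=\varnothing$ or $J=\{0,\dots,f-1\}$.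
   Context: $\mathcal P$ is the set of $f$-tuples $(r_0,\dots,r_{f-1})$ with every $r_i\in\{1,p-1,p\}$ such that, taking indices mod $f$ (so $r_f=r_0$): if $r_i=p$ then $r_{i+1}=1$, and if $r_i\in\{1,p-1\}$ then $r_{i+1}\in\{p-1,p\}$. *)

theory Defs
  imports "HOL-Number_Theory.Number_Theory"
begin

text \<open>Tuples (r_0,...,r_{f-1}) are represented by functions r :: nat => nat,
  only the values at indices i < f matter; indices are taken mod f.\<close>

definition inP :: "nat \<Rightarrow> nat \<Rightarrow> (nat \<Rightarrow> nat) \<Rightarrow> bool" where
  "inP p f r \<longleftrightarrow> (\<forall>i<f. r i \<in> {1, p - 1, p} \<and>
      (r i = p \<longrightarrow> r ((i + 1) mod f) = 1) \<and>
      (r i \<in> {1, p - 1} \<longrightarrow> r ((i + 1) mod f) \<in> {p - 1, p}))"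

definition hval :: "(nat \<Rightarrow> nat) \<Rightarrow> nat set \<Rightarrow> nat \<Rightarrow> nat" where
  "hval r J i = (if i \<in> J then r i else 0)"

definition J_compatible :: "nat \<Rightarrow> nat \<Rightarrow> (nat \<Rightarrow> nat) \<Rightarrow> nat set \<Rightarrow> bool" where
  "J_compatible p f r J \<longleftrightarrow> (\<forall>i<f.
      ((r ((i + f - 1) mod f), r i) = (p, 1) \<longrightarrow>
         (((i + 1) mod f \<in> J) \<longleftrightarrow> i \<notin> J)) \<and>
      ((r ((i + f - 1) mod f), r i) \<in> {(1, p - 1), (p - 1, p - 1)} \<longrightarrow>
         (((i + 1) mod f \<in> J) \<longleftrightarrow> i \<in> J)))"

end

theory Submission imports Defs begin

lemma horner:
  fixes P :: int and e :: "nat \<Rightarrow> int"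
  shows "(\<Sum>i<Suc n. P^(Suc n - 1 - i) * e i) = P * (\<Sum>i<n. P^(n-1-i) * e i) + e n"
proof -
  have "(\<Sum>i<n. P^(Suc n - 1 - i) * e i) = (\<Sum>i<n. P * (P^(n-1-i) * e i))"
  proof (rule sum.cong)
    fix i assume "i \<in> {..<n}"
    then have "Suc n - 1 - i = Suc (n-1-i)" by auto
    then show "P^(Suc n - 1 - i) * e i = P * (P^(n-1-i) * e i)" by simp
  qed simp
  then show ?thesis by (simp add: sum_distrib_left)
qed

lemma telescope:
  fixes P :: int and c :: "nat \<Rightarrow> int"
  shows "(\<Sum>i<n. P^(n-1-i) * (P * c i - c (Suc i))) = P^n * c 0 - c n"
proof (induction n)
  case 0 then show ?case by simp
next
  case (Suc n)
  show ?case unfolding horner[where P=P and e="\<lambda>i. P * c i - c (Suc i)" and n=n] Suc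
    by (simp add: algebra_simps)
qed


lemma carry_iff:
  fixes P :: int and e :: "nat \<Rightarrow> int" assumes "f \<ge> 1"
  shows "(P^f - 1) dvd (\<Sum>i<f. P^(f-1-i) * e i) \<longleftrightarrow>
         (\<exists>c. \<forall>i<f. e i + c ((i+1) mod f) = P * c i)"
proof
  define H where "H n = (\<Sum>i<n. P^(n-1-i) * e i)" for n
  assume "(P^f - 1) dvd (\<Sum>i<f. P^(f-1-i) * e i)"
  then obtain k where k: "H f = (P^f - 1) * k" unfolding H_def by (auto elim: dvdE)
  define c where "c n = k * P^n - H n" for n
  have cf: "c f = c 0" unfolding c_def using k by (simp add: H_def algebra_simps)
  have rel: "e i + c (Suc i) = P * c i" for i
    unfolding c_def H_def using horner[where P=P and e=e and n=i] by (simp add: algebra_simps)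
  show "\<exists>c. \<forall>i<f. e i + c ((i+1) mod f) = P * c i"
  proof (intro exI allI impI)
    fix i assume "i < f"
    then show "e i + c ((i+1) mod f) = P * c i"
      using rel[of i] cf by (cases "i + 1 = f") auto
  qed
next
  assume "\<exists>c. \<forall>i<f. e i + c ((i+1) mod f) = P * c i"
  then obtain c where c: "\<forall>i<f. e i + c ((i+1) mod f) = P * c i" by blast
  define c' where "c' n = c (n mod f)" for n
  have "(\<Sum>i<f. P^(f-1-i) * e i) = (\<Sum>i<f. P^(f-1-i) * (P * c' i - c' (Suc i)))"
  proof (rule sum.cong)
    fix i assume "i \<in> {..<f}"
    then have "i < f" by simp
    show "P^(f-1-i) * e i = P^(f-1-i) * (P * c' i - c' (Suc i))"
    proof -
      have "e i = P * c i - c (Suc i mod f)" using c \<open>i < f\<close> by (simp add: algebra_simps)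
      then show ?thesis unfolding c'_def using \<open>i < f\<close> by simp
    qed
  qed simp
  also have "\<dots> = P^f * c' 0 - c' f" by (rule telescope)
  also have "\<dots> = (P^f - 1) * c 0" unfolding c'_def by (simp add: algebra_simps)
  finally show "(P^f - 1) dvd (\<Sum>i<f. P^(f-1-i) * e i)" by simp
qed


lemma trich:
  fixes c c' d :: int and r p :: nat
  assumes "p \<ge> 2" "\<bar>c\<bar> \<le> 1" "\<bar>c'\<bar> \<le> 1" "1 \<le> r" "r \<le> p"
    "d = (if b then int r else - int r)" "d + c' = int p * c"
  shows "(c = 0 \<and> r = 1 \<and> c' \<noteq> 0 \<and> (b \<longleftrightarrow> c' = -1)) \<or>
         (c \<noteq> 0 \<and> c' = 0 \<and> r = p \<and> (b \<longleftrightarrow> c = 1)) \<or>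
         (c \<noteq> 0 \<and> c' = c \<and> r = p - 1 \<and> (b \<longleftrightarrow> c = 1))"
proof -
  have "c = -1 \<or> c = 0 \<or> c = 1" using assms(2) by auto
  then show ?thesis
  proof (elim disjE)
    assume "c = -1" then show ?thesis using assms by (cases b) auto
  next
    assume "c = 0" then show ?thesis using assms by (cases b) auto
  next
    assume "c = 1" then show ?thesis using assms by (cases b) auto
  qed
qed

lemma two_case:
  fixes c c' d :: int
  assumes "\<bar>c\<bar> = 2" "\<bar>c'\<bar> \<le> 2" "\<bar>d\<bar> \<le> 2" "d + c' = 2*c"
  shows "c' = c \<and> d = c"
  using assms by auto

lemma bound:
  fixes P x :: int
  assumes "P \<ge> 2" "x \<ge> 0" "P * x \<le> P + x"
  shows "x \<le> 1 \<or> (P = 2 \<and> x = 2)"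
proof (rule ccontr)
  assume n: "\<not> ?thesis"
  then have "x \<ge> 2 \<or> P \<noteq> 2" by auto
  show False
  proof (cases "x \<ge> 2")
    case True
    have "(P - 1) * 2 \<le> (P - 1) * x" using True assms by (intro mult_left_mono) auto
    then have "P \<le> 2" using assms by (simp add: algebra_simps)
    then have "P = 2" using assms by simp
    then show False using n assms True by auto
  next
    case False
    then show False using n by auto
  qed
qed


lemma pred_mod:
  fixes i f :: nat
  assumes "i < f" shows "((i + f - 1) mod f + 1) mod f = i" "(i + f - 1) mod f < f"
proof -
  have "f > 0" using assms by simp
  then show "(i + f - 1) mod f < f" by simp
  have "((i + f - 1) mod f + 1) mod f = ((i + f - 1) + 1) mod f" by (simp add: mod_Suc_eq)
  also have "\<dots> = (i + f) mod f" using assms by simp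
  also have "\<dots> = i" using assms by simp
  finally show "((i + f - 1) mod f + 1) mod f = i" .
qed

theorem mainTheorem10:
  fixes p f :: nat and r :: "nat \<Rightarrow> nat" and J :: "nat set"
  assumes "prime p" and "f \<ge> 1"
    and "\<forall>i<f. 1 \<le> r i \<and> r i \<le> p"
    and "J \<subseteq> {0..<f}"
  shows "[(\<Sum>i<f. int p ^ (f - 1 - i) * int (hval r J i))
          = (\<Sum>i<f. int p ^ (f - 1 - i) * (int (r i) - int (hval r J i)))] (mod (int p ^ f - 1))
     \<longleftrightarrow> ((inP p f r \<and> J_compatible p f r J) \<or>
          (p = 2 \<and> (\<forall>i<f. r i = 2) \<and> (J = {} \<or> J = {0..<f})))"
proof -
  have p2: "p \<ge> 2" using assms(1) prime_ge_2_nat by blast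
  have rb: "1 \<le> r i" "r i \<le> p" if "i < f" for i using assms(3) that by auto
  define d where "d i = 2 * int (hval r J i) - int (r i)" for i
  have dJ: "d i = (if i \<in> J then int (r i) else - int (r i))" for i
    unfolding d_def hval_def by auto
  have "[(\<Sum>i<f. int p ^ (f - 1 - i) * int (hval r J i))
          = (\<Sum>i<f. int p ^ (f - 1 - i) * (int (r i) - int (hval r J i)))] (mod (int p ^ f - 1))
        \<longleftrightarrow> (int p ^ f - 1) dvd (\<Sum>i<f. int p ^ (f - 1 - i) * d i)"
    unfolding cong_iff_dvd_diff sum_subtractf[symmetric] d_def
    by (simp add: algebra_simps)
  also have "\<dots> \<longleftrightarrow> (\<exists>c. \<forall>i<f. d i + c ((i+1) mod f) = int p * c i)"
    by (rule carry_iff[OF assms(2)])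
  also have "\<dots> \<longleftrightarrow> ((inP p f r \<and> J_compatible p f r J) \<or>
          (p = 2 \<and> (\<forall>i<f. r i = 2) \<and> (J = {} \<or> J = {0..<f})))"
  proof
    assume "\<exists>c. \<forall>i<f. d i + c ((i+1) mod f) = int p * c i"
    then obtain c where c: "\<And>i. i < f \<Longrightarrow> d i + c ((i+1) mod f) = int p * c i" by blast
    have sl: "(i+1) mod f < f" for i using assms(2) by simp
    obtain i0 where i0: "i0 < f" "\<And>i. i < f \<Longrightarrow> \<bar>c i\<bar> \<le> \<bar>c i0\<bar>"
    proof -
      have "0 \<in> {..<f}" using assms(2) by simp
      then have "finite ((\<lambda>i. \<bar>c i\<bar>) ` {..<f})" "(\<lambda>i. \<bar>c i\<bar>) ` {..<f} \<noteq> {}" by auto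
      then have "Max ((\<lambda>i. \<bar>c i\<bar>) ` {..<f}) \<in> (\<lambda>i. \<bar>c i\<bar>) ` {..<f}" by (rule Max_in)
      then obtain j where j: "j < f" "\<bar>c j\<bar> = Max ((\<lambda>i. \<bar>c i\<bar>) ` {..<f})" by auto
      show ?thesis
      proof (rule that[OF j(1)])
        fix i assume "i < f"
        then show "\<bar>c i\<bar> \<le> \<bar>c j\<bar>" unfolding j(2) by (intro Max_ge) auto
      qed
    qed
    have dabs: "\<bar>d i\<bar> \<le> int p" if "i < f" for i using rb[OF that] dJ[of i] by auto
    have "int p * \<bar>c i0\<bar> \<le> int p + \<bar>c i0\<bar>"
    proof -
      have "int p * \<bar>c i0\<bar> = \<bar>d i0 + c ((i0+1) mod f)\<bar>" using c[OF i0(1)] by (simp add: abs_mult)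
      also have "\<dots> \<le> \<bar>d i0\<bar> + \<bar>c ((i0+1) mod f)\<bar>" by (rule abs_triangle_ineq)
      also have "\<dots> \<le> int p + \<bar>c i0\<bar>" using dabs[OF i0(1)] i0(2)[OF sl[of i0]] by simp
      finally show ?thesis .
    qed
    then have B: "\<bar>c i0\<bar> \<le> 1 \<or> (int p = 2 \<and> \<bar>c i0\<bar> = 2)" using bound[of "int p" "\<bar>c i0\<bar>"] p2 by simp
    then show "(inP p f r \<and> J_compatible p f r J) \<or>
          (p = 2 \<and> (\<forall>i<f. r i = 2) \<and> (J = {} \<or> J = {0..<f}))"
    proof
      assume c1: "\<bar>c i0\<bar> \<le> 1"
      have K: "(c i = 0 \<and> r i = 1 \<and> c ((i+1) mod f) \<noteq> 0 \<and> (i \<in> J \<longleftrightarrow> c ((i+1) mod f) = -1)) \<or>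
         (c i \<noteq> 0 \<and> c ((i+1) mod f) = 0 \<and> r i = p \<and> (i \<in> J \<longleftrightarrow> c i = 1)) \<or>
         (c i \<noteq> 0 \<and> c ((i+1) mod f) = c i \<and> r i = p - 1 \<and> (i \<in> J \<longleftrightarrow> c i = 1))"
        if "i < f" for i
      proof -
        have "\<bar>c i\<bar> \<le> 1" "\<bar>c ((i+1) mod f)\<bar> \<le> 1"
          using i0(2)[OF that] i0(2)[OF sl[of i]] c1 by auto
        from trich[OF p2 this rb[OF that] dJ[of i] c[OF that]] show ?thesis .
      qed
      have pn: "p \<noteq> 1" "p - 1 \<noteq> p" using p2 by auto
      have inP: "inP p f r"
        unfolding inP_def
      proof (intro allI impI)
        fix i assume i: "i < f"
        show "r i \<in> {1, p - 1, p} \<and> (r i = p \<longrightarrow> r ((i + 1) mod f) = 1) \<and>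
           (r i \<in> {1, p - 1} \<longrightarrow> r ((i + 1) mod f) \<in> {p - 1, p})"
          using K[OF i] K[OF sl[of i]] pn by auto
      qed
      have Jc: "J_compatible p f r J"
        unfolding J_compatible_def
      proof (intro allI impI)
        fix i assume i: "i < f"
        define q where "q = (i + f - 1) mod f"
        have q: "q < f" "(q + 1) mod f = i" using pred_mod[OF i] unfolding q_def by auto
        have Kq: "(c q = 0 \<and> r q = 1 \<and> c i \<noteq> 0) \<or>
         (c q \<noteq> 0 \<and> c i = 0 \<and> r q = p) \<or>
         (c q \<noteq> 0 \<and> c i = c q \<and> r q = p - 1)" using K[OF q(1)] q(2) by auto
        note Ki = K[OF i] and Ks = K[OF sl[of i]]
        have cb: "\<bar>c ((i+1) mod f)\<bar> \<le> 1" using i0(2)[OF sl[of i]] c1 by auto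
        then have cb': "c ((i+1) mod f) \<in> {-1,0,1}" by auto
        have Ks1: "c ((i+1) mod f) \<noteq> 0 \<Longrightarrow> ((i+1) mod f \<in> J \<longleftrightarrow> c ((i+1) mod f) = 1)"
          using Ks by blast
        have A1: "(r q, r i) = (p, 1) \<longrightarrow> ((i + 1) mod f \<in> J) = (i \<notin> J)"
        proof
          assume h: "(r q, r i) = (p, 1)"
          then have "c i = 0" using Kq pn by auto
          then have "c ((i+1) mod f) \<noteq> 0" "i \<in> J \<longleftrightarrow> c ((i+1) mod f) = -1" using Ki by auto
          then show "((i + 1) mod f \<in> J) = (i \<notin> J)" using Ks1 cb' by auto
        qed
        have A2: "(r q, r i) \<in> {(1, p - 1), (p - 1, p - 1)} \<longrightarrow> ((i + 1) mod f \<in> J) = (i \<in> J)"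
        proof
          assume h: "(r q, r i) \<in> {(1, p - 1), (p - 1, p - 1)}"
          then have h1: "r q \<noteq> p" "r i = p - 1" using pn by auto
          then have "c i \<noteq> 0" using Kq by auto
          then have "c ((i+1) mod f) = c i" "i \<in> J \<longleftrightarrow> c i = 1" using Ki h1 pn by auto
          then show "((i + 1) mod f \<in> J) = (i \<in> J)" using Ks1 \<open>c i \<noteq> 0\<close> by auto
        qed
        from A1 A2 show "((r ((i + f - 1) mod f), r i) = (p, 1) \<longrightarrow> ((i + 1) mod f \<in> J) = (i \<notin> J)) \<and>
          ((r ((i + f - 1) mod f), r i) \<in> {(1, p - 1), (p - 1, p - 1)} \<longrightarrow> ((i + 1) mod f \<in> J) = (i \<in> J))"
          unfolding q_def by blast
      qed
      show ?thesis using inP Jc by blast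
    next
      assume c2: "int p = 2 \<and> \<bar>c i0\<bar> = 2"
      then have pe: "p = 2" by simp
      have step: "\<bar>c i\<bar> = 2 \<Longrightarrow> c ((i+1) mod f) = c i \<and> d i = c i" if "i < f" for i
      proof -
        assume "\<bar>c i\<bar> = 2"
        moreover have "\<bar>c ((i+1) mod f)\<bar> \<le> 2" using i0(2)[OF sl[of i]] c2 by simp
        moreover have "\<bar>d i\<bar> \<le> 2" using dabs[OF that] pe by simp
        moreover have "d i + c ((i+1) mod f) = 2 * c i" using c[OF that] pe by simp
        ultimately show ?thesis by (rule two_case)
      qed
      have all: "c ((i0 + k) mod f) = c i0" for k
      proof (induction k)
        case 0 then show ?case using i0(1) by simp
        case (Suc k)
        have lt: "(i0 + k) mod f < f" using assms(2) by simp
        have "c (((i0 + k) mod f + 1) mod f) = c ((i0 + k) mod f)"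
          using step[OF lt] Suc c2 by auto
        moreover have "((i0 + k) mod f + 1) mod f = (i0 + Suc k) mod f" by (simp add: mod_Suc_eq)
        ultimately show ?case using Suc by simp
      qed
      have ci: "c i = c i0" if "i < f" for i
      proof -
        have "(i0 + (i + f - i0)) mod f = i" using that i0(1) by simp
        then show ?thesis using all[of "i + f - i0"] by simp
      qed
      have di: "d i = c i0" if "i < f" for i using step[OF that] ci[OF that] c2 by auto
      have r2: "\<forall>i<f. r i = 2"
      proof (intro allI impI)
        fix i assume i: "i < f"
        show "r i = 2" using di[OF i] dJ[of i] c2 by (auto split: if_splits)
      qed
      have "J = {} \<or> J = {0..<f}"
      proof (cases "c i0 = 2")
        case True
        have "\<forall>i<f. i \<in> J"
        proof (intro allI impI)
          fix i assume "i < f"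
          then have "d i = 2" using di True by simp
          then show "i \<in> J" using dJ[of i] by (cases "i \<in> J") auto
        qed
        then show ?thesis using assms(4) by auto
      next
        case False
        then have m: "c i0 = -2" using c2 by auto
        have "\<forall>i<f. i \<notin> J"
        proof (intro allI impI)
          fix i assume "i < f"
          then have "d i = -2" using di m by simp
          then show "i \<notin> J" using dJ[of i] by (cases "i \<in> J") auto
        qed
        then show ?thesis using assms(4) by auto
      qed
      then show ?thesis using pe r2 by blast
    qed
  next
    assume R: "(inP p f r \<and> J_compatible p f r J) \<or>
          (p = 2 \<and> (\<forall>i<f. r i = 2) \<and> (J = {} \<or> J = {0..<f}))"
    show "\<exists>c. \<forall>i<f. d i + c ((i+1) mod f) = int p * c i"
      using R
    proof
      assume A: "inP p f r \<and> J_compatible p f r J"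
      define c where "c i = (if r ((i + f - 1) mod f) = p then 0 else if i \<in> J then 1 else (-1::int))" for i
      show ?thesis
      proof (intro exI allI impI)
        fix i assume i: "i < f"
        define q where "q = (i + f - 1) mod f"
        define s where "s = (i + 1) mod f"
        have q: "q < f" "(q + 1) mod f = i" using pred_mod[OF i] unfolding q_def by auto
        have s0: "s < f" unfolding s_def using assms(2) by simp
        have s1: "(s + f - 1) mod f = i"
        proof (cases "i + 1 = f")
          case True
          then have "s = 0" unfolding s_def by simp
          then show ?thesis using True by simp
        next
          case False
          then have "s = i + 1" unfolding s_def using i by simp
          then have "s + f - 1 = i + f" by simp
          then show ?thesis using i by simp
        qed
        note s = s0 s1
        have ci: "c i = (if r q = p then 0 else if i \<in> J then 1 else -1)" unfolding c_def q_def by simp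
        have cs: "c s = (if r i = p then 0 else if s \<in> J then 1 else -1)" unfolding c_def using s by simp
        have Pq: "r q \<in> {1, p - 1, p}" "r q = p \<longrightarrow> r i = 1" "r q \<in> {1, p - 1} \<longrightarrow> r i \<in> {p - 1, p}"
          using A q unfolding inP_def by auto
        have Ji: "(r q, r i) = (p, 1) \<longrightarrow> (s \<in> J \<longleftrightarrow> i \<notin> J)"
             "(r q, r i) \<in> {(1, p - 1), (p - 1, p - 1)} \<longrightarrow> (s \<in> J \<longleftrightarrow> i \<in> J)"
          using A i unfolding J_compatible_def q_def s_def by auto
        have pn: "p \<noteq> 1" "p - 1 \<noteq> p" using p2 by auto
        have "d i + c s = int p * c i"
        proof (cases "r q = p")
          case True
          then show ?thesis using Pq Ji ci cs dJ[of i] pn by auto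
        next
          case False
          then have "r i = p \<or> r i = p - 1" using Pq by auto
          then show ?thesis
          proof
            assume "r i = p" then show ?thesis using False ci cs dJ[of i] by auto
          next
            assume rp: "r i = p - 1"
            then have "s \<in> J \<longleftrightarrow> i \<in> J" using Ji False Pq by auto
            then show ?thesis using rp False ci cs dJ[of i] pn p2 by auto
          qed
        qed
        then show "d i + c ((i+1) mod f) = int p * c i" unfolding s_def .
      qed
    next
      assume A: "p = 2 \<and> (\<forall>i<f. r i = 2) \<and> (J = {} \<or> J = {0..<f})"
      show ?thesis
      proof (cases "J = {}")
        case True
        show ?thesis by (rule exI[of _ "\<lambda>_. -2"]) (use A True dJ in auto)
      next
        case False
        then have "J = {0..<f}" using A by auto
        then show ?thesis by (intro exI[of _ "\<lambda>_. 2"]) (use A dJ in auto)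
      qed
    qed
  qed
  finally show ?thesis .
qed

end
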